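(* Consider the constrained nonlinear system $x(k+1)=f(x(k),u(k))$ with $f(0,0)=0$, input constraint $u\in\mathcal{U}=\{u\in\mathbb{R}^m:|u_i|\le\bar u_i,\ i=1,\dots,m\}$ and state constraint $x\in\mathcal{X}$ with $0\in\mathcal{X}$. For a horizon $N\ge1$ and stage cost $l$, let $J(x(k),U(k|k))=\sum_{i=0}^{N-1} l(x(k+i+1|k),u(k+i|k))$ with $x(k|k)=x(k)$, $x(k+i+1|k)=f(x(k+i|k),u(k+i|k))$, and let $J^*(x(k))$ be its minimum over $u(k+i|k)\in\mathcal{U}$ subject to $x(k+i+1|k)\in\mathcal{X}$, $i=0,\dots,N-1$, with optimal controls $u^*(k+i|k)$ and optimal predicted states $x^*(k+i|k)$; the MPC law applies $u(k)=u^*(k|k)$. Define $m(x)=\min_{u\in\mathcal{U}} l(f(x,u),u)$ subject to $f(x,u)\in\mathcal{X}$. Assume there exist $\alpha_1,\alpha_2\in\mathcal{K}_\infty$ with $\alpha_1(\|x\|)\le J^*(x)\le\alpha_2(\|x\|)$ and $\alpha_1(\|x\|)\le m(x)\le\alpha_2(\|x\|)$ for all $x\in\mathcal{X}$. For $\alpha>0$ let $\mathcal{X}_T(\alpha)=\{x\in\mathcal{X}: m(x)\le\alpha\}$. If the optimisation problem is feasible for an initial state $x_0\in\mathcal{X}$ and, at every time $k\ge0$, the optimal terminal state satisfies $x^*(k+N|k)\in\mathcal{X}_T(\alpha)$ with $\alpha=m(x(k))$, then the closed-loop system under the MPC algorithm is recursively feasible and stable.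
   Context: Class $\mathcal{K}$: continuous, strictly increasing functions $\phi:\mathbb{R}_+\to\mathbb{R}_+$ with $\phi(0)=0$; class $\mathcal{K}_\infty$: class $\mathcal{K}$ and radially unbounded. Stability refers to the origin of the closed-loop system. *)

theory Defs
  imports "HOL-Analysis.Analysis" "HOL-Library.Extended_Real"
begin

definition classK :: "(real \<Rightarrow> real) \<Rightarrow> bool" where
  "classK \<phi> \<longleftrightarrow> continuous_on {0..} \<phi> \<and> strict_mono_on {0..} \<phi> \<and> \<phi> 0 = 0
      \<and> (\<forall>r\<ge>0. \<phi> r \<ge> 0)"

definition classKinf :: "(real \<Rightarrow> real) \<Rightarrow> bool" where
  "classKinf \<phi> \<longleftrightarrow> classK \<phi> \<and> filterlim \<phi> at_top at_top"

definition input_box :: "real ^ 'm \<Rightarrow> (real ^ 'm) set" where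
  "input_box ubar = {u. \<forall>i. \<bar>u $ i\<bar> \<le> ubar $ i}"

text \<open>Predicted states x(k+i|k) from x(k|k) = x under inputs us i = u(k+i|k).\<close>
primrec pred_state :: "('x \<Rightarrow> 'u \<Rightarrow> 'x) \<Rightarrow> 'x \<Rightarrow> (nat \<Rightarrow> 'u) \<Rightarrow> nat \<Rightarrow> 'x" where
  "pred_state f x us 0 = x"
| "pred_state f x us (Suc i) = f (pred_state f x us i) (us i)"

definition Jcost :: "('x \<Rightarrow> 'u \<Rightarrow> 'x) \<Rightarrow> ('x \<Rightarrow> 'u \<Rightarrow> real) \<Rightarrow> nat \<Rightarrow> 'x \<Rightarrow> (nat \<Rightarrow> 'u) \<Rightarrow> real" where
  "Jcost f l N x us = (\<Sum>i<N. l (pred_state f x us (Suc i)) (us i))"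

definition mpc_feasible :: "('x \<Rightarrow> 'u \<Rightarrow> 'x) \<Rightarrow> 'u set \<Rightarrow> 'x set \<Rightarrow> nat \<Rightarrow> 'x \<Rightarrow> (nat \<Rightarrow> 'u) \<Rightarrow> bool" where
  "mpc_feasible f U X N x us \<longleftrightarrow> (\<forall>i<N. us i \<in> U \<and> pred_state f x us (Suc i) \<in> X)"

text \<open>Optimal value J*; the infimum over an empty feasible set is \<infinity>.\<close>
definition Jstar :: "('x \<Rightarrow> 'u \<Rightarrow> 'x) \<Rightarrow> ('x \<Rightarrow> 'u \<Rightarrow> real) \<Rightarrow> 'u set \<Rightarrow> 'x set \<Rightarrow> nat \<Rightarrow> 'x \<Rightarrow> ereal" where
  "Jstar f l U X N x = (INF us \<in> {us. mpc_feasible f U X N x us}. ereal (Jcost f l N x us))"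

definition mpc_optimal :: "('x \<Rightarrow> 'u \<Rightarrow> 'x) \<Rightarrow> ('x \<Rightarrow> 'u \<Rightarrow> real) \<Rightarrow> 'u set \<Rightarrow> 'x set \<Rightarrow> nat \<Rightarrow> 'x \<Rightarrow> (nat \<Rightarrow> 'u) \<Rightarrow> bool" where
  "mpc_optimal f l U X N x us \<longleftrightarrow> mpc_feasible f U X N x us \<and> ereal (Jcost f l N x us) = Jstar f l U X N x"

text \<open>m(x) = min over u in U with f(x,u) in X of l(f(x,u),u) (infimum; \<infinity> if infeasible).\<close>
definition mstage :: "('x \<Rightarrow> 'u \<Rightarrow> 'x) \<Rightarrow> ('x \<Rightarrow> 'u \<Rightarrow> real) \<Rightarrow> 'u set \<Rightarrow> 'x set \<Rightarrow> 'x \<Rightarrow> ereal" where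
  "mstage f l U X x = (INF u \<in> {u \<in> U. f x u \<in> X}. ereal (l (f x u) u))"

definition XT :: "('x \<Rightarrow> 'u \<Rightarrow> 'x) \<Rightarrow> ('x \<Rightarrow> 'u \<Rightarrow> real) \<Rightarrow> 'u set \<Rightarrow> 'x set \<Rightarrow> ereal \<Rightarrow> 'x set" where
  "XT f l U X a = {x \<in> X. mstage f l U X x \<le> a}"

text \<open>A closed-loop trajectory xs of the MPC algorithm, with useq k the optimal input
  sequence computed at time k (useq k i = u*(k+i|k)); includes the hypotheses of the
  theorem: initial feasibility and the terminal condition x*(k+N|k) in X_T(m(x(k))).\<close>
definition mpc_closed_loop ::
  "('x \<Rightarrow> 'u \<Rightarrow> 'x) \<Rightarrow> ('x \<Rightarrow> 'u \<Rightarrow> real) \<Rightarrow> 'u set \<Rightarrow> 'x set \<Rightarrow> nat \<Rightarrow> (nat \<Rightarrow> 'x) \<Rightarrow> (nat \<Rightarrow> nat \<Rightarrow> 'u) \<Rightarrow> bool" where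
  "mpc_closed_loop f l U X N xs useq \<longleftrightarrow>
     xs 0 \<in> X \<and> (\<exists>us. mpc_feasible f U X N (xs 0) us) \<and>
     (\<forall>k. (\<exists>us. mpc_feasible f U X N (xs k) us) \<longrightarrow>
          mpc_optimal f l U X N (xs k) (useq k) \<and>
          xs (Suc k) = f (xs k) (useq k 0) \<and>
          pred_state f (xs k) (useq k) N \<in> XT f l U X (mstage f l U X (xs k)))"

end

theory Submission
  imports Defs
begin

lemma shift_state:
  "i \<le> M \<Longrightarrow> pred_state f (f x (us 0)) (\<lambda>i. if i < M then us (Suc i) else u) i
     = pred_state f x us (Suc i)"
  by (induction i) auto

lemma shift_last:
  "pred_state f (f x (us 0)) (\<lambda>i. if i < M then us (Suc i) else u) (Suc M)
     = f (pred_state f x us (Suc M)) u"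
  using shift_state[of M M f x us u] by simp

lemma shift_feasible:
  assumes "mpc_feasible f U X (Suc M) x us" "u \<in> U" "f (pred_state f x us (Suc M)) u \<in> X"
  shows "mpc_feasible f U X (Suc M) (f x (us 0)) (\<lambda>i. if i < M then us (Suc i) else u)"
  unfolding mpc_feasible_def
proof (intro allI impI)
  fix i assume i: "i < Suc M"
  show "(if i < M then us (Suc i) else u) \<in> U \<and>
        pred_state f (f x (us 0)) (\<lambda>i. if i < M then us (Suc i) else u) (Suc i) \<in> X"
  proof (cases "i < M")
    case True
    then have "pred_state f (f x (us 0)) (\<lambda>i. if i < M then us (Suc i) else u) (Suc i)
       = pred_state f x us (Suc (Suc i))" using shift_state[of "Suc i" M] by simp
    with True assms(1) show ?thesis unfolding mpc_feasible_def by auto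
  next
    case False
    then have "i = M" using i by simp
    then show ?thesis using assms shift_last[of f x us M u] by simp
  qed
qed

lemma shift_cost:
  "Jcost f l (Suc M) (f x (us 0)) (\<lambda>i. if i < M then us (Suc i) else u)
     = Jcost f l (Suc M) x us - l (f x (us 0)) (us 0) + l (f (pred_state f x us (Suc M)) u) u"
proof -
  have A: "(\<Sum>i<M. l (pred_state f (f x (us 0)) (\<lambda>i. if i < M then us (Suc i) else u) (Suc i))
              ((\<lambda>i. if i < M then us (Suc i) else u) i))
         = (\<Sum>i<M. l (pred_state f x us (Suc (Suc i))) (us (Suc i)))"
    proof (rule sum.cong)
    fix i assume "i \<in> {..<M}"
    then have "Suc i \<le> M" by simp
    from shift_state[OF this, of f x us u] \<open>i \<in> {..<M}\<close>
    show "l (pred_state f (f x (us 0)) (\<lambda>i. if i < M then us (Suc i) else u) (Suc i))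
              ((\<lambda>i. if i < M then us (Suc i) else u) i) = l (pred_state f x us (Suc (Suc i))) (us (Suc i))"
      by simp
  qed simp
  have B: "Jcost f l (Suc M) x us = l (f x (us 0)) (us 0) + (\<Sum>i<M. l (pred_state f x us (Suc (Suc i))) (us (Suc i)))"
    unfolding Jcost_def by (subst sum.lessThan_Suc_shift) simp
  show ?thesis
    unfolding Jcost_def[of f l "Suc M" "f x (us 0)"] sum.lessThan_Suc
    using A B shift_last[of f x us M u] by simp
qed

theorem theorem8:
  fixes f :: "real ^ 'n \<Rightarrow> real ^ 'm \<Rightarrow> real ^ 'n"
    and l :: "real ^ 'n \<Rightarrow> real ^ 'm \<Rightarrow> real"
    and ubar :: "real ^ 'm"
    and X :: "(real ^ 'n) set"
    and N :: nat
    and \<alpha>1 \<alpha>2 :: "real \<Rightarrow> real"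
  defines "U \<equiv> input_box ubar"
  assumes f0: "f 0 0 = 0"
    and X0: "0 \<in> X"
    and N1: "N \<ge> 1"
    and K1: "classKinf \<alpha>1" and K2: "classKinf \<alpha>2"
    and Jbnd: "\<forall>x\<in>X. ereal (\<alpha>1 (norm x)) \<le> Jstar f l U X N x \<and> Jstar f l U X N x \<le> ereal (\<alpha>2 (norm x))"
    and mbnd: "\<forall>x\<in>X. ereal (\<alpha>1 (norm x)) \<le> mstage f l U X x \<and> mstage f l U X x \<le> ereal (\<alpha>2 (norm x))"
  shows "(\<forall>xs useq. mpc_closed_loop f l U X N xs useq \<longrightarrow>
            (\<forall>k. \<exists>us. mpc_feasible f U X N (xs k) us))
       \<and> (\<forall>\<epsilon>>0. \<exists>\<delta>>0. \<forall>xs useq. mpc_closed_loop f l U X N xs useq \<and> norm (xs 0) < \<delta> \<longrightarrow>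
            (\<forall>k. norm (xs k) < \<epsilon>))"
proof -
  obtain M where NM: "N = Suc M" using N1 by (cases N) auto
  have step: "(\<exists>us. mpc_feasible f U X N (xs (Suc k)) us) \<and> xs (Suc k) \<in> X \<and>
       Jcost f l N (xs (Suc k)) (useq (Suc k)) \<le> Jcost f l N (xs k) (useq k)"
    if cl: "mpc_closed_loop f l U X N xs useq" and fk: "\<exists>us. mpc_feasible f U X N (xs k) us"
      and xk: "xs k \<in> X"
    for xs useq k
  proof -
    let ?us = "useq k"
    let ?xN = "pred_state f (xs k) ?us N"
    have opt: "mpc_optimal f l U X N (xs k) ?us" and nxt: "xs (Suc k) = f (xs k) (?us 0)"
      and trm: "?xN \<in> XT f l U X (mstage f l U X (xs k))"
      using cl fk unfolding mpc_closed_loop_def by auto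
    have feas: "mpc_feasible f U X N (xs k) ?us" using opt unfolding mpc_optimal_def by blast
    have xN: "?xN \<in> X" and mle: "mstage f l U X ?xN \<le> mstage f l U X (xs k)"
      using trm unfolding XT_def by auto
    have mfin: "mstage f l U X ?xN < \<infinity>" proof -
      have "mstage f l U X ?xN \<le> ereal (\<alpha>2 (norm ?xN))" using mbnd xN by blast
      then show ?thesis by (rule order.strict_trans1) simp
    qed
    have "{u \<in> U. f ?xN u \<in> X} \<noteq> {}"
    proof
      assume "{u \<in> U. f ?xN u \<in> X} = {}"
      then have "mstage f l U X ?xN = \<infinity>" unfolding mstage_def by (simp only: INF_empty top_ereal_def)
      with mfin show False by simp
    qed
    then obtain u0 where u0: "u0 \<in> U" "f ?xN u0 \<in> X" by auto
    define sh where "sh u = (\<lambda>i. if i < M then ?us (Suc i) else u)" for u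
    have shf: "mpc_feasible f U X N (xs (Suc k)) (sh u)" if "u \<in> U" "f ?xN u \<in> X" for u
      using shift_feasible[of f U X M "xs k" ?us u] feas that nxt unfolding sh_def NM by simp
    have x1: "xs (Suc k) \<in> X" and u0in: "?us 0 \<in> U"
      using feas nxt N1 unfolding mpc_feasible_def by (auto simp: NM)
    show ?thesis
    proof (intro conjI)
      show "\<exists>us. mpc_feasible f U X N (xs (Suc k)) us" using shf[OF u0] by blast
      show "xs (Suc k) \<in> X" by (fact x1)
      have opt1: "mpc_optimal f l U X N (xs (Suc k)) (useq (Suc k))"
        using cl shf[OF u0] unfolding mpc_closed_loop_def by blast
      define c1 where "c1 = Jcost f l N (xs (Suc k)) (useq (Suc k))"
      define c0 where "c0 = Jcost f l N (xs k) ?us"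
      define lu where "lu = l (xs (Suc k)) (?us 0)"
      have "ereal (c1 - c0 + lu) \<le> ereal (l (f ?xN u) u)" if "u \<in> {u \<in> U. f ?xN u \<in> X}" for u
      proof -
        have "ereal c1 = Jstar f l U X N (xs (Suc k))" using opt1 unfolding c1_def mpc_optimal_def by simp
        also have "\<dots> \<le> ereal (Jcost f l N (xs (Suc k)) (sh u))"
          unfolding Jstar_def using shf that by (auto intro!: INF_lower)
        also have "Jcost f l N (xs (Suc k)) (sh u) = c0 - lu + l (f ?xN u) u"
          unfolding sh_def c0_def lu_def NM nxt by (rule shift_cost)
        finally show ?thesis by simp
      qed
      then have "ereal (c1 - c0 + lu) \<le> mstage f l U X ?xN"
        unfolding mstage_def by (rule INF_greatest)
      also have "\<dots> \<le> mstage f l U X (xs k)" by (fact mle)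
      also have "\<dots> \<le> ereal lu"
        unfolding mstage_def lu_def nxt using u0in x1 nxt by (auto intro!: INF_lower)
      finally show "c1 \<le> c0" by simp
    qed
  qed
  have inv: "(\<exists>us. mpc_feasible f U X N (xs k) us) \<and> xs k \<in> X \<and>
       Jcost f l N (xs k) (useq k) \<le> Jcost f l N (xs 0) (useq 0)"
    if cl: "mpc_closed_loop f l U X N xs useq" for xs useq k
  proof (induction k)
    case 0
    then show ?case using cl unfolding mpc_closed_loop_def by auto
  next
    case (Suc k)
    then have "(\<exists>us. mpc_feasible f U X N (xs k) us)" "xs k \<in> X"
      "Jcost f l N (xs k) (useq k) \<le> Jcost f l N (xs 0) (useq 0)" by blast+
    with step[OF cl this(1,2)] show ?case by (meson order_trans)
  qed
  have Jval: "ereal (Jcost f l N (xs k) (useq k)) = Jstar f l U X N (xs k)"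
    if cl: "mpc_closed_loop f l U X N xs useq" for xs useq k
    using inv[OF cl, of k] cl unfolding mpc_closed_loop_def mpc_optimal_def by blast
  show ?thesis
  proof (intro conjI allI impI)
    fix xs useq k assume "mpc_closed_loop f l U X N xs useq"
    then show "\<exists>us. mpc_feasible f U X N (xs k) us" using inv by blast
  next
    fix \<epsilon> :: real assume ep: "\<epsilon> > 0"
    have a1K: "classK \<alpha>1" and a2K: "classK \<alpha>2" using K1 K2 classKinf_def by auto
    have sm1: "strict_mono_on {0..} \<alpha>1" and a10: "\<alpha>1 0 = 0" using a1K unfolding classK_def by auto
    have a1pos: "\<alpha>1 \<epsilon> > 0" using strict_mono_onD[OF sm1, of 0 \<epsilon>] ep a10 by simp
    have "continuous (at 0 within {0..}) \<alpha>2"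
      using a2K unfolding classK_def by (meson atLeast_iff continuous_on_eq_continuous_within order_refl)
    then obtain d where d: "d > 0" "\<And>y. y \<in> {0..} \<Longrightarrow> dist y 0 < d \<Longrightarrow> dist (\<alpha>2 y) (\<alpha>2 0) < \<alpha>1 \<epsilon>"
      unfolding continuous_within_eps_delta using a1pos by blast
    have a2d: "\<alpha>2 y < \<alpha>1 \<epsilon>" if "0 \<le> y" "y < d" for y
      using d(2)[of y] that a2K unfolding classK_def by auto
    show "\<exists>\<delta>>0. \<forall>xs useq. mpc_closed_loop f l U X N xs useq \<and> norm (xs 0) < \<delta> \<longrightarrow>
            (\<forall>k. norm (xs k) < \<epsilon>)"
    proof (intro exI[of _ d] conjI allI impI)
      show "d > 0" by (fact d(1))
      fix xs useq k assume H: "mpc_closed_loop f l U X N xs useq \<and> norm (xs 0) < d"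
      then have cl: "mpc_closed_loop f l U X N xs useq" by blast
      have xk: "xs k \<in> X" and x0: "xs 0 \<in> X" and le: "Jcost f l N (xs k) (useq k) \<le> Jcost f l N (xs 0) (useq 0)"
        using inv[OF cl, of k] inv[OF cl, of 0] by auto
      have "ereal (\<alpha>1 (norm (xs k))) \<le> ereal (Jcost f l N (xs k) (useq k))"
        using Jbnd xk Jval[OF cl, of k] by simp
      moreover have "ereal (Jcost f l N (xs 0) (useq 0)) \<le> ereal (\<alpha>2 (norm (xs 0)))"
        using Jbnd x0 Jval[OF cl, of 0] by simp
      ultimately have "\<alpha>1 (norm (xs k)) < \<alpha>1 \<epsilon>"
        using le a2d[of "norm (xs 0)"] H by simp
      then show "norm (xs k) < \<epsilon>"
        using strict_mono_on_leD[OF sm1, of \<epsilon> "norm (xs k)"] ep by force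
    qed
  qed
qed

end
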